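(* Let $\mathscr{H}$ be a complex Hilbert space, $N(\cdot)$ a norm on $\mathbb{B}(\mathscr{H})$, and $B,C\in\mathbb{B}(\mathscr{H})$. Then: (a) $w_{(N,e)}(B,C)=\frac{1}{\sqrt2}\,w_{(N,e)}(B+C,B-C)$; (b) $w_{(N,e)}(\Re B,\Im B)=\frac{1}{\sqrt2}\,w_{(N,e)}(B,B^* )=w_N(B)$; (c) $w_{(N,e)}(B,B)=\sqrt2\, w_N(B)$; (d) $w_{(N,e)}(B^*,C^* )=w_{(N,e)}(B,C)$; (e) if $N$ is weakly unitarily invariant, i.e. $N(U^*TU)=N(T)$ for all $T\in\mathbb{B}(\mathscr{H})$ and all unitary $U\in\mathbb{B}(\mathscr{H})$, then $w_{(N,e)}(U^*BU,U^*CU)=w_{(N,e)}(B,C)$ for every unitary $U\in\mathbb{B}(\mathscr{H})$; (f) $$w_{(N,e)}(B,C)=\sup_{|\lambda_1|^2+|\lambda_2|^2\leq1}\ \sup_{\alpha,\beta\in\mathbb{R},\ \alpha^2+\beta^2=1} N\big(\alpha\Re(\lambda_1B+\lambda_2C)+\beta\Im(\lambda_1B+\lambda_2C)\big),$$ where $\lambda_1,\lambda_2$ range over $\mathbb{C}$.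
   Context: For $T\in\mathbb{B}(\mathscr{H})$: $\Re(T)=\frac12(T+T^* )$, $\Im(T)=\frac{1}{2i}(T-T^* )$, and $w_N(T)=\sup_{\theta\in\mathbb{R}}N(\Re(e^{i\theta}T))$. For $B,C\in\mathbb{B}(\mathscr{H})$, $w_{(N,e)}(B,C)=\sup_{\lambda_1,\lambda_2\in\mathbb{C},\ |\lambda_1|^2+|\lambda_2|^2\leq 1}\sup_{\theta\in\mathbb{R}} N(\Re(e^{i\theta}(\lambda_1B+\lambda_2C)))$. *)

theory Defs
  imports "HOL-Analysis.Analysis"
begin

class complex_vector = real_vector +
  fixes scaleC :: "complex \<Rightarrow> 'a \<Rightarrow> 'a" (infixr \<open>*\<^sub>C\<close> 75)
  assumes scaleC_add_right: "a *\<^sub>C (x + y) = a *\<^sub>C x + a *\<^sub>C y"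
    and scaleC_add_left: "(a + b) *\<^sub>C x = a *\<^sub>C x + b *\<^sub>C x"
    and scaleC_scaleC: "a *\<^sub>C (b *\<^sub>C x) = (a * b) *\<^sub>C x"
    and scaleC_one: "1 *\<^sub>C x = x"
    and scaleR_scaleC: "scaleR r x = (complex_of_real r) *\<^sub>C x"

class complex_inner = complex_vector + real_normed_vector +
  fixes cinner :: "'a \<Rightarrow> 'a \<Rightarrow> complex"
  assumes cinner_commute: "cinner x y = cnj (cinner y x)"
    and cinner_add_left: "cinner (x + y) z = cinner x z + cinner y z"
    and cinner_scaleC_left: "cinner (c *\<^sub>C x) y = c * cinner x y"
    and cinner_ge_zero: "0 \<le> Re (cinner x x)"
    and cinner_eq_zero_iff: "cinner x x = 0 \<longleftrightarrow> x = 0"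
    and norm_eq_sqrt_cinner: "norm x = sqrt (Re (cinner x x))"

text \<open>A complex Hilbert space is a type of sort \<open>{complex_inner, complete_space}\<close>.\<close>

definition bounded_op :: "('h::complex_inner \<Rightarrow> 'h) \<Rightarrow> bool" where
  "bounded_op T \<longleftrightarrow> (\<forall>x y. T (x + y) = T x + T y) \<and> (\<forall>c x. T (c *\<^sub>C x) = c *\<^sub>C T x)
     \<and> (\<exists>K. \<forall>x. norm (T x) \<le> K * norm x)"

definition cadjoint :: "('h::complex_inner \<Rightarrow> 'h) \<Rightarrow> ('h \<Rightarrow> 'h)" where
  "cadjoint T = (SOME S. bounded_op S \<and> (\<forall>x y. cinner (T x) y = cinner x (S y)))"

definition op_add :: "('h::complex_inner \<Rightarrow> 'h) \<Rightarrow> ('h \<Rightarrow> 'h) \<Rightarrow> ('h \<Rightarrow> 'h)" where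
  "op_add S T = (\<lambda>x. S x + T x)"

definition op_diff :: "('h::complex_inner \<Rightarrow> 'h) \<Rightarrow> ('h \<Rightarrow> 'h) \<Rightarrow> ('h \<Rightarrow> 'h)" where
  "op_diff S T = (\<lambda>x. S x - T x)"

definition op_scale :: "complex \<Rightarrow> ('h::complex_inner \<Rightarrow> 'h) \<Rightarrow> ('h \<Rightarrow> 'h)" where
  "op_scale c T = (\<lambda>x. c *\<^sub>C T x)"

definition ReOp :: "('h::complex_inner \<Rightarrow> 'h) \<Rightarrow> ('h \<Rightarrow> 'h)" where
  "ReOp T = op_scale (1/2) (op_add T (cadjoint T))"

definition ImOp :: "('h::complex_inner \<Rightarrow> 'h) \<Rightarrow> ('h \<Rightarrow> 'h)" where
  "ImOp T = op_scale (1 / (2 * \<i>)) (op_diff T (cadjoint T))"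

definition unitary_op :: "('h::complex_inner \<Rightarrow> 'h) \<Rightarrow> bool" where
  "unitary_op U \<longleftrightarrow> bounded_op U \<and> cadjoint U \<circ> U = id \<and> U \<circ> cadjoint U = id"

text \<open>A norm on \<open>\<bbbB>(H)\<close> (only its values on bounded operators matter).\<close>
definition is_op_norm :: "(('h::complex_inner \<Rightarrow> 'h) \<Rightarrow> real) \<Rightarrow> bool" where
  "is_op_norm N \<longleftrightarrow>
     (\<forall>T. bounded_op T \<longrightarrow> 0 \<le> N T) \<and>
     (\<forall>T. bounded_op T \<longrightarrow> (N T = 0 \<longleftrightarrow> T = (\<lambda>x. 0))) \<and>
     (\<forall>c T. bounded_op T \<longrightarrow> N (op_scale c T) = cmod c * N T) \<and>
     (\<forall>S T. bounded_op S \<longrightarrow> bounded_op T \<longrightarrow> N (op_add S T) \<le> N S + N T)"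

definition weakly_unitarily_invariant :: "(('h::complex_inner \<Rightarrow> 'h) \<Rightarrow> real) \<Rightarrow> bool" where
  "weakly_unitarily_invariant N \<longleftrightarrow>
     (\<forall>T U. bounded_op T \<longrightarrow> unitary_op U \<longrightarrow> N (cadjoint U \<circ> T \<circ> U) = N T)"

definition wN :: "(('h::complex_inner \<Rightarrow> 'h) \<Rightarrow> real) \<Rightarrow> ('h \<Rightarrow> 'h) \<Rightarrow> real" where
  "wN N T = (SUP \<theta>\<in>(UNIV::real set). N (ReOp (op_scale (exp (\<i> * complex_of_real \<theta>)) T)))"

definition unit_pairs :: "(complex \<times> complex) set" where
  "unit_pairs = {(l1, l2). (cmod l1)\<^sup>2 + (cmod l2)\<^sup>2 \<le> 1}"

definition wNe :: "(('h::complex_inner \<Rightarrow> 'h) \<Rightarrow> real) \<Rightarrow> ('h \<Rightarrow> 'h) \<Rightarrow> ('h \<Rightarrow> 'h) \<Rightarrow> real" where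
  "wNe N B C = (SUP l\<in>unit_pairs. SUP \<theta>\<in>(UNIV::real set).
      N (ReOp (op_scale (exp (\<i> * complex_of_real \<theta>))
                 (op_add (op_scale (fst l) B) (op_scale (snd l) C)))))"

end

theory Submission
  imports Defs
begin

declare cinner_add_left[simp] cinner_scaleC_left[simp]

lemma cinner_zero_left[simp]: fixes x y z h :: "'a::complex_inner" shows "cinner 0 z = 0"
  using cinner_add_left[of 0 0 z] by simp
lemma cinner_minus_left[simp]: fixes x y z h :: "'a::complex_inner" shows "cinner (- x) z = - cinner x z"
proof -
  have "cinner x z + cinner (- x) z = 0" using cinner_add_left[of x "-x" z] by simp
  then show ?thesis by (simp only: add_eq_0_iff)
qed
lemma cinner_diff_left[simp]: fixes x y z h :: "'a::complex_inner" shows "cinner (x - y) z = cinner x z - cinner y z"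
  using cinner_add_left[of x "-y" z] by simp
lemma cinner_add_right[simp]: fixes x y z h :: "'a::complex_inner" shows "cinner x (y + z) = cinner x y + cinner x z"
  by (metis cinner_add_left cinner_commute complex_cnj_add)
lemma cinner_scaleC_right[simp]: fixes x y z h :: "'a::complex_inner" shows "cinner x (c *\<^sub>C y) = cnj c * cinner x y"
  by (metis cinner_scaleC_left cinner_commute complex_cnj_mult)
lemma cinner_zero_right[simp]: fixes x y z h :: "'a::complex_inner" shows "cinner x 0 = 0"
  by (metis cinner_commute cinner_zero_left complex_cnj_zero)
lemma cinner_minus_right[simp]: fixes x y z h :: "'a::complex_inner" shows "cinner x (- y) = - cinner x y"
  by (metis cinner_commute cinner_minus_left complex_cnj_minus)
lemma cinner_diff_right[simp]: fixes x y z h :: "'a::complex_inner" shows "cinner x (y - z) = cinner x y - cinner x z"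
  by (metis cinner_commute cinner_diff_left complex_cnj_diff)
lemma cinner_scaleR_left[simp]: fixes x y z h :: "'a::complex_inner" shows "cinner (r *\<^sub>R x) y = of_real r * cinner x y"
  unfolding scaleR_scaleC by (rule cinner_scaleC_left)
lemma cinner_scaleR_right[simp]: fixes x y z h :: "'a::complex_inner" shows "cinner x (r *\<^sub>R y) = of_real r * cinner x y"
  unfolding scaleR_scaleC cinner_scaleC_right by simp
lemma cinner_self: fixes x y z h :: "'a::complex_inner" shows "cinner x x = complex_of_real ((norm x)\<^sup>2)"
proof -
  have "Im (cinner x x) = - Im (cinner x x)" using arg_cong[OF cinner_commute[of x x], of Im] by simp
  then have "Im (cinner x x) = 0" by simp
  moreover have "Re (cinner x x) = (norm x)\<^sup>2" using cinner_ge_zero[of x] norm_eq_sqrt_cinner[of x] by simp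
  ultimately show ?thesis by (simp add: complex_eq_iff)
qed
lemma norm_sq_Re: fixes x y z h :: "'a::complex_inner" shows "(norm x)\<^sup>2 = Re (cinner x x)"
  by (simp add: cinner_self)
lemma norm_scaleC: fixes x y z h :: "'a::complex_inner" shows "norm (c *\<^sub>C x) = cmod c * norm x"
proof -
  have "cinner (c *\<^sub>C x) (c *\<^sub>C x) = (c * cnj c) * cinner x x"
    by (simp add: cinner_scaleC_left mult.assoc)
  also have "\<dots> = complex_of_real ((cmod c)\<^sup>2) * complex_of_real ((norm x)\<^sup>2)"
    by (simp add: cinner_self complex_norm_square del: of_real_power)
  finally have "(norm (c *\<^sub>C x))\<^sup>2 = (cmod c * norm x)\<^sup>2"
    by (metis cinner_self of_real_eq_iff of_real_mult power_mult_distrib)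
  then show ?thesis
    by (metis norm_ge_zero power2_eq_imp_eq mult_nonneg_nonneg)
qed
lemma vec_eqI: fixes x y z h :: "'a::complex_inner" shows "(\<And>z. cinner x z = cinner y z) \<Longrightarrow> x = y"
  by (metis cinner_diff_left cinner_eq_zero_iff eq_iff_diff_eq_0)
lemma vec_eqI_right: fixes x y z h :: "'a::complex_inner" shows "(\<And>z. cinner z x = cinner z y) \<Longrightarrow> x = y"
  by (metis vec_eqI cinner_commute)
lemma cauchy_schwarz: fixes x y z h :: "'a::complex_inner" shows "cmod (cinner x y) \<le> norm x * norm y"
proof (cases "y = 0")
  case True then show ?thesis by simp
next
  case False
  define n where "n = (norm y)\<^sup>2"
  have n: "n > 0" using False by (simp add: n_def)
  define a where "a = cinner x y"
  define t where "t = a / complex_of_real n"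
  have "cinner (x - t *\<^sub>C y) (x - t *\<^sub>C y) = cinner x x - cnj t * a - t * cnj a + t * cnj t * complex_of_real n"
    by (simp add: cinner_scaleC_left a_def n_def cinner_self[of y] algebra_simps cinner_commute[of y x])
  also have "\<dots> = complex_of_real ((norm x)\<^sup>2 - (cmod a)\<^sup>2 / n)"
    using n by (simp add: t_def cinner_self field_simps complex_norm_square del: of_real_power)
  finally have "0 \<le> (norm x)\<^sup>2 - (cmod a)\<^sup>2 / n"
    by (metis Re_complex_of_real cinner_ge_zero)
  then have "(cmod a)\<^sup>2 \<le> (norm x * norm y)\<^sup>2" using n
    by (simp add: field_simps n_def power_mult_distrib)
  then show ?thesis unfolding a_def
    by (rule power2_le_imp_le) simp
qed
lemma parallelogram: fixes x y z h :: "'a::complex_inner" shows "(norm (x + y))\<^sup>2 + (norm (x - y))\<^sup>2 = 2 * (norm x)\<^sup>2 + 2 * (norm y)\<^sup>2"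
  by (simp add: norm_sq_Re)
lemma norm_add_scaleR_sq: fixes x y z h :: "'a::complex_inner" shows "(norm (z + t *\<^sub>R h))\<^sup>2 = (norm z)\<^sup>2 + 2 * t * Re (cinner h z) + t\<^sup>2 * (norm h)\<^sup>2"
proof -
  have "Re (cinner z h) = Re (cinner h z)" using arg_cong[OF cinner_commute[of z h], of Re] by simp
  then show ?thesis unfolding norm_sq_Re by (simp add: power2_eq_square algebra_simps)
qed



lemma quad_nonneg_zero:
  fixes a b :: real
  assumes b: "b \<ge> 0" and h: "\<And>t. 0 \<le> t * a + t\<^sup>2 * b"
  shows "a = 0"
proof (rule ccontr)
  assume a: "a \<noteq> 0"
  define t where "t = - a / (2*b+1)"
  have pos: "2*b+1 > 0" using b by simp
  have at: "a = - t * (2*b+1)" using pos by (simp add: t_def)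
  have t0: "t \<noteq> 0" using a pos by (simp add: t_def)
  have "t * a + t\<^sup>2 * b = - (t\<^sup>2 * (b+1))"
    by (simp add: at power2_eq_square algebra_simps)
  also have "\<dots> < 0" using t0 b by (simp add: mult_pos_pos)
  finally show False using h[of t] by simp
qed

lemma riesz:
  fixes f :: "'a::{complex_inner,complete_space} \<Rightarrow> complex"
  assumes add: "\<And>x y. f (x + y) = f x + f y"
    and hom: "\<And>c x. f (c *\<^sub>C x) = c * f x"
    and bd: "\<And>x. cmod (f x) \<le> K * norm x"
  shows "\<exists>z. \<forall>x. f x = cinner x z"
proof -
  have fR: "f (r *\<^sub>R x) = of_real r * f x" for r x by (simp add: scaleR_scaleC hom)
  have fminus: "f (- x) = - f x" for x using fR[of "-1" x] by simp
  have fdiff: "f (x - y) = f x - f y" for x y using add[of x "-y"] fminus[of y] by simp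
  define \<phi> where "\<phi> x = (norm x)\<^sup>2/2 - Re (f x)" for x
  have lb: "- (K\<^sup>2)/2 \<le> \<phi> x" for x
  proof -
    have "Re (f x) \<le> K * norm x" using complex_Re_le_cmod[of "f x"] bd[of x] by linarith
    moreover have "0 \<le> (norm x - K)\<^sup>2" by simp
    then have "2 * (K * norm x) \<le> (norm x)\<^sup>2 + K\<^sup>2" by (simp add: power2_diff algebra_simps)
    ultimately show ?thesis unfolding \<phi>_def by linarith
  qed
  have bdd: "bdd_below (range \<phi>)" using lb by (intro bdd_belowI[where m="- (K\<^sup>2)/2"]) auto
  define m where "m = Inf (range \<phi>)"
  have m_le: "m \<le> \<phi> x" for x unfolding m_def using bdd by (simp add: cInf_lower)
  have "\<exists>x. \<phi> x < m + inverse (real (Suc n))" for n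
  proof -
    have "Inf (range \<phi>) < m + inverse (real (Suc n))" unfolding m_def by simp
    then show ?thesis using bdd by (subst (asm) cInf_less_iff) auto
  qed
  then obtain xs where xs: "\<And>n. \<phi> (xs n) < m + inverse (real (Suc n))" by metis
  have par: "(norm (x - y))\<^sup>2 \<le> 4 * (\<phi> x + \<phi> y - 2*m)" for x y
  proof -
    define mid where "mid = (1/2) *\<^sub>R (x + y)"
    have "(norm mid)\<^sup>2 = (norm (x + y))\<^sup>2 / 4" unfolding mid_def by (simp add: power2_eq_square)
    moreover have "f mid = (f x + f y) / 2" unfolding mid_def fR add by simp
    then have "Re (f mid) = (Re (f x) + Re (f y)) / 2" by (metis Re_divide_numeral plus_complex.sel(1))
    ultimately have "\<phi> mid = (\<phi> x + \<phi> y)/2 - (norm (x - y))\<^sup>2 / 8"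
      using parallelogram[of x y] unfolding \<phi>_def by (simp add: field_simps)
    then show ?thesis using m_le[of mid] by (simp add: field_simps)
  qed
  have cau: "Cauchy xs"
  proof (rule CauchyI)
    fix e :: real assume e: "0 < e"
    obtain M :: nat where M: "8 / e\<^sup>2 < real M" using reals_Archimedean2 by blast
    show "\<exists>M. \<forall>m\<ge>M. \<forall>n\<ge>M. norm (xs m - xs n) < e"
    proof (intro exI allI impI)
      fix p q assume p: "p \<ge> M" and q: "q \<ge> M"
      have ip: "inverse (real (Suc p)) \<le> inverse (real (Suc M))" using p by (simp add: field_simps)
      have iq: "inverse (real (Suc q)) \<le> inverse (real (Suc M))" using q by (simp add: field_simps)
      have "(norm (xs p - xs q))\<^sup>2 \<le> 4 * (\<phi> (xs p) + \<phi> (xs q) - 2*m)" by (rule par)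
      also have "\<dots> < 8 * inverse (real (Suc M))" using xs[of p] xs[of q] ip iq unfolding ring_distribs by linarith
      also have "\<dots> < e\<^sup>2"
      proof -
        have "8 / e\<^sup>2 < real (Suc M)" using M by simp
        then show ?thesis using e by (simp add: field_simps)
      qed
      finally show "norm (xs p - xs q) < e" using e by (simp add: power_less_imp_less_base)
    qed
  qed
  then obtain z where lim: "xs \<longlonglongrightarrow> z" using Cauchy_convergent_iff convergent_def by blast
  have "(\<lambda>n. xs n - z) \<longlonglongrightarrow> 0" using lim by (rule LIM_zero)
  then have "(\<lambda>n. K * norm (xs n - z)) \<longlonglongrightarrow> 0"
    by (simp add: tendsto_mult_right_zero tendsto_norm_zero)
  then have "(\<lambda>n. f (xs n) - f z) \<longlonglongrightarrow> 0"
    by (rule Lim_null_comparison[rotated]) (simp add: bd fdiff[symmetric])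
  then have "(\<lambda>n. f (xs n)) \<longlonglongrightarrow> f z" by (rule LIM_zero_cancel)
  then have philim: "(\<lambda>n. \<phi> (xs n)) \<longlonglongrightarrow> \<phi> z"
    unfolding \<phi>_def by (intro tendsto_intros lim) auto
  have "(\<lambda>n. m + inverse (real (Suc n))) \<longlonglongrightarrow> m + 0"
    by (intro tendsto_intros LIMSEQ_inverse_real_of_nat)
  then have "\<phi> z \<le> m" using philim xs
    by (intro LIMSEQ_le[OF philim]) (auto intro: less_imp_le)
  then have zmin: "\<phi> z \<le> \<phi> w" for w using m_le[of w] by simp
  have reeq: "Re (f h) = Re (cinner h z)" for h
  proof -
    have "0 \<le> t * (Re (cinner h z) - Re (f h)) + t\<^sup>2 * ((norm h)\<^sup>2 / 2)" for t
    proof -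
      have "\<phi> z \<le> \<phi> (z + t *\<^sub>R h)" by (rule zmin)
      then show ?thesis unfolding \<phi>_def norm_add_scaleR_sq add fR
        by (simp add: algebra_simps)
    qed
    from quad_nonneg_zero[OF _ this] show ?thesis by simp
  qed
  have "f h = cinner h z" for h
  proof (rule complex_eqI)
    show "Re (f h) = Re (cinner h z)" by (rule reeq)
    have "Re (f (\<i> *\<^sub>C h)) = Re (cinner (\<i> *\<^sub>C h) z)" by (rule reeq)
    then show "Im (f h) = Im (cinner h z)" by (simp add: hom)
  qed
  then show ?thesis by blast
qed



lemma bounded_opD:
  assumes "bounded_op T"
  shows bo_add: "T (x + y) = T x + T y" and bo_scaleC: "T (c *\<^sub>C x) = c *\<^sub>C T x"
  using assms unfolding bounded_op_def by auto

lemma bo_bound: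
  assumes "bounded_op T" shows "\<exists>K\<ge>0. \<forall>x. norm (T x) \<le> K * norm x"
proof -
  obtain K where K: "\<And>x. norm (T x) \<le> K * norm x" using assms unfolding bounded_op_def by auto
  have "norm (T x) \<le> max K 0 * norm x" for x
    using K[of x] by (meson max.cobounded1 mult_right_mono norm_ge_zero order_trans)
  then show ?thesis by (intro exI[of _ "max K 0"]) auto
qed

lemma bounded_opI:
  assumes "\<And>x y. T (x + y) = T x + T y" "\<And>c x. T (c *\<^sub>C x) = c *\<^sub>C T x"
    "\<And>x. norm (T x) \<le> K * norm x"
  shows "bounded_op T"
  using assms unfolding bounded_op_def by blast

lemma adjoint_exists:
  fixes T :: "'a::{complex_inner,complete_space} \<Rightarrow> 'a"
  assumes T: "bounded_op T"
  shows "\<exists>S. bounded_op S \<and> (\<forall>x y. cinner (T x) y = cinner x (S y))"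
proof -
  obtain K where K0: "K \<ge> 0" and K: "\<And>x. norm (T x) \<le> K * norm x" using bo_bound[OF T] by auto
  have "\<exists>z. \<forall>x. cinner (T x) y = cinner x z" for y
  proof (rule riesz[where K="K * norm y"])
    show "cinner (T (x + x')) y = cinner (T x) y + cinner (T x') y" for x x' by (simp add: bo_add[OF T])
    show "cinner (T (c *\<^sub>C x)) y = c * cinner (T x) y" for c x by (simp add: bo_scaleC[OF T])
    show "cmod (cinner (T x) y) \<le> K * norm y * norm x" for x
    proof -
      have "cmod (cinner (T x) y) \<le> norm (T x) * norm y" by (rule cauchy_schwarz)
      also have "\<dots> \<le> K * norm x * norm y" using K[of x] by (simp add: mult_right_mono)
      finally show ?thesis by (simp add: algebra_simps)
    qed
  qed
  then obtain S where S: "\<And>x y. cinner (T x) y = cinner x (S y)" by metis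
  have "bounded_op S"
  proof (rule bounded_opI)
    show "S (x + y) = S x + S y" for x y
      by (rule vec_eqI_right) (simp flip: S)
    show "S (c *\<^sub>C x) = c *\<^sub>C S x" for c x
      by (rule vec_eqI_right) (simp flip: S)
    show "norm (S y) \<le> K * norm y" for y
    proof (cases "norm (S y) = 0")
      case True then show ?thesis using K0 by simp
    next
      case False
      have "(norm (S y))\<^sup>2 = Re (cinner (T (S y)) y)" by (simp add: norm_sq_Re S)
      also have "\<dots> \<le> cmod (cinner (T (S y)) y)" by (rule complex_Re_le_cmod)
      also have "\<dots> \<le> norm (T (S y)) * norm y" by (rule cauchy_schwarz)
      also have "\<dots> \<le> K * norm (S y) * norm y" using K[of "S y"] by (simp add: mult_right_mono)
      finally have "norm (S y) * norm (S y) \<le> norm (S y) * (K * norm y)"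
        by (simp add: power2_eq_square algebra_simps)
      then show ?thesis using False by (simp add: mult_le_cancel_left)
    qed
  qed
  with S show ?thesis by blast
qed

lemma cadjoint_spec:
  fixes T :: "'a::{complex_inner,complete_space} \<Rightarrow> 'a"
  assumes "bounded_op T"
  shows "bounded_op (cadjoint T) \<and> (\<forall>x y. cinner (T x) y = cinner x (cadjoint T y))"
  unfolding cadjoint_def using someI_ex[OF adjoint_exists[OF assms]] .

lemma bounded_cadjoint[simp]:
  fixes T :: "'a::{complex_inner,complete_space} \<Rightarrow> 'a"
  shows "bounded_op T \<Longrightarrow> bounded_op (cadjoint T)"
  using cadjoint_spec by blast

lemma cinner_adj_right:
  fixes T :: "'a::{complex_inner,complete_space} \<Rightarrow> 'a"
  shows "bounded_op T \<Longrightarrow> cinner x (cadjoint T y) = cinner (T x) y"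
  using cadjoint_spec by metis

lemma cinner_adj_left:
  fixes T :: "'a::{complex_inner,complete_space} \<Rightarrow> 'a"
  shows "bounded_op T \<Longrightarrow> cinner (cadjoint T y) x = cinner y (T x)"
  by (metis cinner_adj_right cinner_commute)

lemma adj_unique:
  fixes T :: "'a::{complex_inner,complete_space} \<Rightarrow> 'a"
  assumes "bounded_op T" "\<And>x y. cinner (T x) y = cinner x (S y)"
  shows "cadjoint T = S"
proof
  fix y show "cadjoint T y = S y"
    by (rule vec_eqI_right) (simp add: cinner_adj_right assms)
qed

lemma op_eqI:
  fixes S T :: "'a::complex_inner \<Rightarrow> 'a"
  shows "(\<And>x z. cinner (S x) z = cinner (T x) z) \<Longrightarrow> S = T"
  by (rule ext, rule vec_eqI) 

lemma scaleC_minus1: "(-1) *\<^sub>C (x::'a::complex_vector) = - x"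
  by (metis of_real_1 of_real_minus scaleR_minus1_left scaleR_scaleC)

lemma op_diff_eq: "op_diff S T = op_add S (op_scale (-1) T)"
  unfolding op_diff_def op_add_def op_scale_def by (simp add: scaleC_minus1)

lemma scaleC_add_right': "c *\<^sub>C (x + y) = c *\<^sub>C x + c *\<^sub>C (y::'a::complex_vector)"
  by (rule scaleC_add_right)

lemma bounded_add[simp]: "bounded_op S \<Longrightarrow> bounded_op T \<Longrightarrow> bounded_op (op_add S T)"
proof -
  assume S: "bounded_op S" and T: "bounded_op T"
  obtain K1 where "\<forall>x. norm (S x) \<le> K1 * norm x" using bo_bound[OF S] by auto
  moreover obtain K2 where "\<forall>x. norm (T x) \<le> K2 * norm x" using bo_bound[OF T] by auto
  ultimately have "norm (S x + T x) \<le> (K1 + K2) * norm x" for x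
  proof -
    assume a: "\<forall>x. norm (S x) \<le> K1 * norm x" "\<forall>x. norm (T x) \<le> K2 * norm x"
    have "norm (S x + T x) \<le> norm (S x) + norm (T x)" by (rule norm_triangle_ineq)
    also have "\<dots> \<le> K1 * norm x + K2 * norm x" using a by (intro add_mono) auto
    finally show ?thesis by (simp add: distrib_right)
  qed
  then show ?thesis unfolding op_add_def
    by (intro bounded_opI[where K="K1+K2"]) (auto simp: bo_add[OF S] bo_add[OF T] bo_scaleC[OF S] bo_scaleC[OF T] scaleC_add_right)
qed

lemma bounded_scale[simp]: "bounded_op T \<Longrightarrow> bounded_op (op_scale c T)"
proof -
  assume T: "bounded_op T"
  obtain K where K0: "K \<ge> 0" and K: "\<forall>x. norm (T x) \<le> K * norm x" using bo_bound[OF T] by auto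
  have "norm (c *\<^sub>C T x) \<le> (cmod c * K) * norm x" for x
    using K by (simp add: norm_scaleC mult.assoc mult_left_mono)
  then show ?thesis unfolding op_scale_def
    by (intro bounded_opI[where K="cmod c * K"]) (auto simp: bo_add[OF T] bo_scaleC[OF T] scaleC_add_right scaleC_scaleC mult.commute)
qed

lemma bounded_diff[simp]: "bounded_op S \<Longrightarrow> bounded_op T \<Longrightarrow> bounded_op (op_diff S T)"
  by (simp add: op_diff_eq)

lemma bounded_comp[simp]: "bounded_op S \<Longrightarrow> bounded_op T \<Longrightarrow> bounded_op (S \<circ> T)"
proof -
  assume S: "bounded_op S" and T: "bounded_op T"
  obtain K1 where K1: "K1 \<ge> 0" "\<forall>x. norm (S x) \<le> K1 * norm x" using bo_bound[OF S] by auto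
  obtain K2 where K2: "\<forall>x. norm (T x) \<le> K2 * norm x" using bo_bound[OF T] by auto
  have "norm (S (T x)) \<le> (K1 * K2) * norm x" for x
    using K1 K2 by (metis mult.assoc mult_left_mono order_trans)
  then show ?thesis
    by (intro bounded_opI[where K="K1*K2"]) (auto simp: bo_add[OF S] bo_add[OF T] bo_scaleC[OF S] bo_scaleC[OF T])
qed

lemma bounded_ReOp[simp]: "bounded_op (T::'a::{complex_inner,complete_space} \<Rightarrow> 'a) \<Longrightarrow> bounded_op (ReOp T)"
  unfolding ReOp_def by simp
lemma bounded_ImOp[simp]: "bounded_op (T::'a::{complex_inner,complete_space} \<Rightarrow> 'a) \<Longrightarrow> bounded_op (ImOp T)"
  unfolding ImOp_def by simp

lemma adj_adj[simp]: "bounded_op (T::'a::{complex_inner,complete_space} \<Rightarrow> 'a) \<Longrightarrow> cadjoint (cadjoint T) = T"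
  by (rule adj_unique) (simp_all add: cinner_adj_left)
lemma adj_add[simp]: "bounded_op (S::'a::{complex_inner,complete_space} \<Rightarrow> 'a) \<Longrightarrow> bounded_op T \<Longrightarrow>
   cadjoint (op_add S T) = op_add (cadjoint S) (cadjoint T)"
  by (rule adj_unique) (simp, simp add: op_add_def cinner_adj_right)
lemma adj_scale[simp]: "bounded_op (T::'a::{complex_inner,complete_space} \<Rightarrow> 'a) \<Longrightarrow>
   cadjoint (op_scale c T) = op_scale (cnj c) (cadjoint T)"
  by (rule adj_unique) (simp, simp add: op_scale_def cinner_adj_right)
lemma adj_diff[simp]: "bounded_op (S::'a::{complex_inner,complete_space} \<Rightarrow> 'a) \<Longrightarrow> bounded_op T \<Longrightarrow>
   cadjoint (op_diff S T) = op_diff (cadjoint S) (cadjoint T)"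
  by (simp add: op_diff_eq)
lemma adj_comp[simp]: "bounded_op (S::'a::{complex_inner,complete_space} \<Rightarrow> 'a) \<Longrightarrow> bounded_op T \<Longrightarrow>
   cadjoint (S \<circ> T) = cadjoint T \<circ> cadjoint S"
  by (rule adj_unique) (simp_all add: cinner_adj_right)




lemma sup2_le:
  fixes F :: "'a \<Rightarrow> 'b \<Rightarrow> real"
  assumes "A \<noteq> {}" "B \<noteq> {}" "\<And>a b. a \<in> A \<Longrightarrow> b \<in> B \<Longrightarrow> F a b \<le> y"
  shows "(SUP a\<in>A. SUP b\<in>B. F a b) \<le> y"
  using assms by (intro cSUP_least) auto

lemma le_sup2:
  fixes F :: "'a \<Rightarrow> 'b \<Rightarrow> real"
  assumes M: "\<And>a b. a \<in> A \<Longrightarrow> b \<in> B \<Longrightarrow> F a b \<le> M" and a: "a \<in> A" and b: "b \<in> B"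
  shows "F a b \<le> (SUP a\<in>A. SUP b\<in>B. F a b)"
proof -
  have bi: "bdd_above (F a' ` B)" if "a' \<in> A" for a' using M that by (intro bdd_aboveI2) auto
  have "F a b \<le> (SUP b\<in>B. F a b)" using bi[OF a] b by (rule cSUP_upper2) simp
  also have "\<dots> \<le> (SUP a\<in>A. SUP b\<in>B. F a b)"
  proof (rule cSUP_upper[OF a])
    show "bdd_above ((\<lambda>a. SUP b\<in>B. F a b) ` A)"
      using M b by (intro bdd_aboveI2[where M=M] cSUP_least) auto
  qed
  finally show ?thesis .
qed

lemma sup2_eq_scale:
  fixes F :: "'a \<Rightarrow> 'b \<Rightarrow> real" and G :: "'c \<Rightarrow> 'd \<Rightarrow> real"
  assumes k: "k > 0" and ne: "A \<noteq> {}" "B \<noteq> {}" "C \<noteq> {}" "D \<noteq> {}"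
    and M: "\<And>a b. a \<in> A \<Longrightarrow> b \<in> B \<Longrightarrow> F a b \<le> M"
    and h1: "\<And>a b. a \<in> A \<Longrightarrow> b \<in> B \<Longrightarrow> \<exists>c\<in>C. \<exists>d\<in>D. F a b \<le> k * G c d"
    and h2: "\<And>c d. c \<in> C \<Longrightarrow> d \<in> D \<Longrightarrow> \<exists>a\<in>A. \<exists>b\<in>B. k * G c d \<le> F a b"
  shows "(SUP a\<in>A. SUP b\<in>B. F a b) = k * (SUP c\<in>C. SUP d\<in>D. G c d)"
proof -
  have MG: "G c d \<le> M / k" if cd: "c \<in> C" "d \<in> D" for c d
  proof -
    obtain a b where "a \<in> A" "b \<in> B" "k * G c d \<le> F a b" using h2[OF cd] by blast
    then have "k * G c d \<le> M" using M by (meson order_trans)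
    then show ?thesis using k by (simp add: field_simps)
  qed
  have MF: "G c d \<le> (SUP a\<in>A. SUP b\<in>B. F a b) / k" if cd: "c \<in> C" "d \<in> D" for c d
  proof -
    obtain a b where ab: "a \<in> A" "b \<in> B" "k * G c d \<le> F a b" using h2[OF cd] by blast
    then have "k * G c d \<le> (SUP a\<in>A. SUP b\<in>B. F a b)" using le_sup2[of A B F M a b, OF M ab(1) ab(2)] by linarith
    then show ?thesis using k by (simp add: field_simps)
  qed
  have "(SUP a\<in>A. SUP b\<in>B. F a b) \<le> k * (SUP c\<in>C. SUP d\<in>D. G c d)"
  proof (rule sup2_le[OF ne(1,2)])
    fix a b assume ab: "a \<in> A" "b \<in> B"
    obtain c d where cd: "c \<in> C" "d \<in> D" "F a b \<le> k * G c d" using h1[OF ab] by blast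
    have "G c d \<le> (SUP c\<in>C. SUP d\<in>D. G c d)" using le_sup2[of C D G "M/k" c d, OF MG cd(1) cd(2)] .
    then show "F a b \<le> k * (SUP c\<in>C. SUP d\<in>D. G c d)" using cd(3) k
      by (meson mult_left_mono less_imp_le order_trans)
  qed
  moreover have "(SUP c\<in>C. SUP d\<in>D. G c d) \<le> (SUP a\<in>A. SUP b\<in>B. F a b) / k"
    by (rule sup2_le[OF ne(3,4) MF])
  then have "k * (SUP c\<in>C. SUP d\<in>D. G c d) \<le> (SUP a\<in>A. SUP b\<in>B. F a b)"
    using k by (simp add: field_simps)
  ultimately show ?thesis by linarith
qed

locale opnorm =
  fixes N :: "('h::{complex_inner,complete_space} \<Rightarrow> 'h) \<Rightarrow> real"
  assumes N: "is_op_norm N"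
begin
lemma N_nonneg: "bounded_op T \<Longrightarrow> 0 \<le> N T" using N unfolding is_op_norm_def by blast
lemma N_scale: "bounded_op T \<Longrightarrow> N (op_scale c T) = cmod c * N T" using N unfolding is_op_norm_def by blast
lemma N_add: "bounded_op S \<Longrightarrow> bounded_op T \<Longrightarrow> N (op_add S T) \<le> N S + N T"
  using N unfolding is_op_norm_def by blast
end




abbreviation E :: "real \<Rightarrow> complex" where "E \<theta> \<equiv> exp (\<i> * complex_of_real \<theta>)"

lemma E_norm[simp]: "cmod (E \<theta>) = 1" by (rule norm_exp_i_times)
lemma E_cnj: "cnj (E \<theta>) = E (- \<theta>)" by (simp add: exp_cnj)
lemma E_euler: "E \<theta> = complex_of_real (cos \<theta>) + \<i> * complex_of_real (sin \<theta>)"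
  by (simp add: cis_conv_exp[symmetric] complex_eq_iff)

lemmas opdefs = op_add_def op_scale_def op_diff_def

lemma ReOp_scale_real:
  fixes T :: "'h::{complex_inner,complete_space} \<Rightarrow> 'h"
  assumes "bounded_op T"
  shows "ReOp (op_scale (complex_of_real r) T) = op_scale (complex_of_real r) (ReOp T)"
  using assms apply (simp add: ReOp_def)
  apply (rule op_eqI)
  apply (simp add: opdefs algebra_simps)
  done

lemma Re_eq_mu:
  fixes B :: "'h::{complex_inner,complete_space} \<Rightarrow> 'h"
  assumes "bounded_op B"
  shows "ReOp (op_scale e (op_add (op_scale l1 B) (op_scale l2 (cadjoint B)))) = ReOp (op_scale (e*l1 + cnj (e*l2)) B)"
  using assms apply (simp add: ReOp_def)
  apply (rule op_eqI)
  apply (simp add: opdefs algebra_simps)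
  done

lemma Re_eq_BB:
  fixes B :: "'h::{complex_inner,complete_space} \<Rightarrow> 'h"
  shows "ReOp (op_scale e (op_add (op_scale l1 B) (op_scale l2 B))) = ReOp (op_scale (e*(l1+l2)) B)"
  apply (rule arg_cong[where f=ReOp])
  apply (rule op_eqI)
  apply (simp add: opdefs algebra_simps)
  done

lemma Re_adj:
  fixes B C :: "'h::{complex_inner,complete_space} \<Rightarrow> 'h"
  assumes "bounded_op B" "bounded_op C"
  shows "ReOp (op_scale (E \<theta>) (op_add (op_scale l1 (cadjoint B)) (op_scale l2 (cadjoint C))))
       = ReOp (op_scale (E (-\<theta>)) (op_add (op_scale (cnj l1) B) (op_scale (cnj l2) C)))"
  using assms apply (simp add: ReOp_def)
  apply (rule op_eqI)
  apply (simp add: opdefs algebra_simps exp_cnj)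
  done

lemma Re_unit:
  fixes B C U :: "'h::{complex_inner,complete_space} \<Rightarrow> 'h"
  assumes "bounded_op B" "bounded_op C" "bounded_op U"
  shows "ReOp (op_scale e (op_add (op_scale l1 (cadjoint U \<circ> B \<circ> U)) (op_scale l2 (cadjoint U \<circ> C \<circ> U))))
     = cadjoint U \<circ> ReOp (op_scale e (op_add (op_scale l1 B) (op_scale l2 C))) \<circ> U"
  using assms apply (simp add: ReOp_def)
  apply (rule op_eqI)
  apply (simp add: opdefs algebra_simps cinner_adj_left)
  done

lemma Re_rot:
  fixes X :: "'h::{complex_inner,complete_space} \<Rightarrow> 'h"
  assumes "bounded_op X"
  shows "ReOp (op_scale (E \<theta>) X) = op_add (op_scale (complex_of_real (cos \<theta>)) (ReOp X)) (op_scale (complex_of_real (- sin \<theta>)) (ImOp X))"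
  using assms apply (simp add: ReOp_def ImOp_def E_euler)
  apply (rule op_eqI)
  apply (simp add: opdefs field_simps)
  done




abbreviation sq2 :: complex where "sq2 \<equiv> complex_of_real (sqrt 2)"

lemma s2_nz[simp]: "sq2 \<noteq> 0" by simp
lemma s2_sq: "sq2 * sq2 = 2" by (simp flip: of_real_mult)

lemma X_a1:
  fixes B C :: "'h::complex_inner \<Rightarrow> 'h"
  shows "op_add (op_scale l1 B) (op_scale l2 C) = op_scale (complex_of_real (1/sqrt 2))
     (op_add (op_scale ((l1+l2)* sq2/2) (op_add B C)) (op_scale ((l1-l2)* sq2/2) (op_diff B C)))"
  apply (rule op_eqI)
  apply (simp add: opdefs field_simps)
  done

lemma X_a2:
  fixes B C :: "'h::complex_inner \<Rightarrow> 'h"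
  shows "op_add (op_scale l1 (op_add B C)) (op_scale l2 (op_diff B C)) = op_scale (complex_of_real (sqrt 2))
     (op_add (op_scale ((l1+l2)/sq2) B) (op_scale ((l1-l2)/sq2) C))"
  apply (rule op_eqI)
  apply (simp add: opdefs field_simps)
  done

lemma X_b1:
  fixes B :: "'h::complex_inner \<Rightarrow> 'h"
  shows "op_add (op_scale l1 (ReOp B)) (op_scale l2 (ImOp B)) = op_scale (complex_of_real (1/sqrt 2))
     (op_add (op_scale ((l1 - \<i>*l2)* sq2/2) B) (op_scale ((l1 + \<i>*l2)* sq2/2) (cadjoint B)))"
  apply (simp add: ReOp_def ImOp_def)
  apply (rule op_eqI)
  apply (simp add: opdefs field_simps)
  done

lemma X_b2:
  fixes B :: "'h::complex_inner \<Rightarrow> 'h"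
  shows "op_add (op_scale l1 B) (op_scale l2 (cadjoint B)) = op_scale (complex_of_real (sqrt 2))
     (op_add (op_scale ((l1+l2)/sq2) (ReOp B)) (op_scale (\<i>*(l1-l2)/sq2) (ImOp B)))"
  apply (simp add: ReOp_def ImOp_def)
  apply (rule op_eqI)
  apply (simp add: opdefs field_simps)
  done

lemma cpar: "(cmod (a + b))\<^sup>2 + (cmod (a - b))\<^sup>2 = 2 * (cmod a)\<^sup>2 + 2 * (cmod b)\<^sup>2"
  by (simp only: cmod_power2) (simp add: power2_eq_square algebra_simps)

lemma up_iff: "(a, b) \<in> unit_pairs \<longleftrightarrow> (cmod a)\<^sup>2 + (cmod b)\<^sup>2 \<le> 1"
  by (simp add: unit_pairs_def)

lemma up_M1: "(a, b) \<in> unit_pairs \<Longrightarrow> ((a+b)* sq2/2, (a-b)* sq2/2) \<in> unit_pairs"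
  unfolding up_iff using cpar[of a b] by (simp add: norm_mult norm_divide power_mult_distrib power_divide)

lemma up_M2: "(a, b) \<in> unit_pairs \<Longrightarrow> ((a+b)/sq2, (a-b)/sq2) \<in> unit_pairs"
  unfolding up_iff using cpar[of a b] by (simp add: norm_mult norm_divide power_mult_distrib power_divide)

lemma up_M1': "(a, b) \<in> unit_pairs \<Longrightarrow> ((a - \<i>*b)* sq2/2, (a + \<i>*b)* sq2/2) \<in> unit_pairs"
  using up_M1[of a "-\<i>*b"] by (simp add: up_iff norm_mult)

lemma up_M2': "(a, b) \<in> unit_pairs \<Longrightarrow> ((a+b)/sq2, \<i>*(a-b)/sq2) \<in> unit_pairs"
  using up_M2[of a b] by (simp add: up_iff norm_mult norm_divide)

lemma up_cnj: "(a, b) \<in> unit_pairs \<Longrightarrow> (cnj a, cnj b) \<in> unit_pairs"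
  by (simp add: up_iff)

lemma up_bound: "(a, b) \<in> unit_pairs \<Longrightarrow> cmod a \<le> 1 \<and> cmod b \<le> 1"
proof -
  assume h: "(a, b) \<in> unit_pairs"
  have h': "(cmod a)\<^sup>2 + (cmod b)\<^sup>2 \<le> 1" using h by (simp add: up_iff)
  have "0 \<le> (cmod a)\<^sup>2" "0 \<le> (cmod b)\<^sup>2" by simp_all
  then have "(cmod a)\<^sup>2 \<le> 1\<^sup>2" "(cmod b)\<^sup>2 \<le> 1\<^sup>2" using h' unfolding power_one by linarith+
  then show ?thesis using power2_le_imp_le[of "cmod a" 1] power2_le_imp_le[of "cmod b" 1] by simp
qed

lemma up_sum: "(a, b) \<in> unit_pairs \<Longrightarrow> cmod a + cmod b \<le> sqrt 2"
proof -
  assume h: "(a, b) \<in> unit_pairs"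
  have e: "(cmod a + cmod b)\<^sup>2 = 2 * ((cmod a)\<^sup>2 + (cmod b)\<^sup>2) - (cmod a - cmod b)\<^sup>2"
    by (simp add: power2_eq_square algebra_simps)
  have "0 \<le> (cmod a - cmod b)\<^sup>2" by simp
  then have "(cmod a + cmod b)\<^sup>2 \<le> 2 * ((cmod a)\<^sup>2 + (cmod b)\<^sup>2)" using e by linarith
  also have "\<dots> \<le> 2" using h by (simp add: up_iff)
  finally show ?thesis by (rule real_le_rsqrt)
qed

lemma up_0: "(0, 0) \<in> unit_pairs" by (simp add: up_iff)




context opnorm begin

lemma N_ReOp_le: "bounded_op T \<Longrightarrow> N (ReOp T) \<le> (N T + N (cadjoint T)) / 2"
proof -
  assume T: "bounded_op T"
  have "N (ReOp T) = cmod (1/2) * N (op_add T (cadjoint T))" unfolding ReOp_def using T by (simp add: N_scale)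
  also have "\<dots> \<le> (N T + N (cadjoint T)) / 2" using N_add[of T "cadjoint T"] T by simp
  finally show ?thesis .
qed

lemma N_comb_le:
  assumes "bounded_op B" "bounded_op C" "cmod a \<le> 1" "cmod b \<le> 1"
  shows "N (op_add (op_scale a B) (op_scale b C)) \<le> N B + N C"
proof -
  have "N (op_add (op_scale a B) (op_scale b C)) \<le> cmod a * N B + cmod b * N C"
    using N_add[of "op_scale a B" "op_scale b C"] assms by (simp add: N_scale)
  also have "\<dots> \<le> N B + N C" using assms N_nonneg[of B] N_nonneg[of C]
    by (intro add_mono mult_left_le_one_le) auto
  finally show ?thesis .
qed

lemma F_bound:
  assumes B: "bounded_op B" and C: "bounded_op C" and l: "l \<in> unit_pairs"
  shows "N (ReOp (op_scale (E \<theta>) (op_add (op_scale (fst l) B) (op_scale (snd l) C))))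
     \<le> (N B + N C + N (cadjoint B) + N (cadjoint C)) / 2"
proof -
  obtain l1 l2 where l12: "l = (l1, l2)" by (cases l)
  have b: "cmod l1 \<le> 1" "cmod l2 \<le> 1" using up_bound[of l1 l2] l l12 by auto
  let ?X = "op_add (op_scale l1 B) (op_scale l2 C)"
  have X: "bounded_op ?X" using B C by simp
  have "N (ReOp (op_scale (E \<theta>) ?X)) \<le> (N (op_scale (E \<theta>) ?X) + N (cadjoint (op_scale (E \<theta>) ?X))) / 2"
    using X by (intro N_ReOp_le) simp
  also have "N (op_scale (E \<theta>) ?X) = N ?X" using X by (simp add: N_scale)
  also have "N (cadjoint (op_scale (E \<theta>) ?X)) = N (op_add (op_scale (cnj l1) (cadjoint B)) (op_scale (cnj l2) (cadjoint C)))"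
    using X B C by (simp add: N_scale)
  also have "N ?X \<le> N B + N C" using N_comb_le[OF B C b] .
  also have "N (op_add (op_scale (cnj l1) (cadjoint B)) (op_scale (cnj l2) (cadjoint C))) \<le> N (cadjoint B) + N (cadjoint C)"
    using B C b by (intro N_comb_le) auto
  finally show ?thesis using l12 by (simp add: divide_right_mono)
qed

lemma scale_mult: "op_scale (a * b) T = op_scale a (op_scale b (T::'h \<Rightarrow> 'h))"
  by (rule op_eqI) (simp add: op_scale_def)

lemma N_ReOp_scale_mult:
  assumes "bounded_op T"
  shows "N (ReOp (op_scale (complex_of_real r * c) T)) = \<bar>r\<bar> * N (ReOp (op_scale c T))"
  using assms by (simp add: scale_mult ReOp_scale_real N_scale)

lemma F_rel:
  assumes "bounded_op Z" "Y = op_scale (complex_of_real r) Z"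
  shows "N (ReOp (op_scale c Y)) = \<bar>r\<bar> * N (ReOp (op_scale c Z))"
proof -
  have "op_scale c Y = op_scale (complex_of_real r * c) Z"
    using assms(2) by (simp add: scale_mult[symmetric] mult.commute)
  then show ?thesis using N_ReOp_scale_mult[OF assms(1)] by simp
qed

lemma polar:
  assumes "bounded_op B"
  shows "N (ReOp (op_scale \<mu> B)) = cmod \<mu> * N (ReOp (op_scale (E (Arg \<mu>)) B))"
proof -
  have "\<mu> = complex_of_real (cmod \<mu>) * E (Arg \<mu>)"
    by (metis rcis_cmod_Arg rcis_def cis_conv_exp)
  then have "N (ReOp (op_scale \<mu> B)) = N (ReOp (op_scale (complex_of_real (cmod \<mu>) * E (Arg \<mu>)) B))" by simp
  also have "\<dots> = cmod \<mu> * N (ReOp (op_scale (E (Arg \<mu>)) B))" using N_ReOp_scale_mult[OF assms] by simp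
  finally show ?thesis .
qed

end



context opnorm begin

lemma part_a:
  assumes B: "bounded_op B" and C: "bounded_op C"
  shows "wNe N B C = 1 / sqrt 2 * wNe N (op_add B C) (op_diff B C)"
  unfolding wNe_def
  apply (rule sup2_eq_scale[where M="(N B + N C + N (cadjoint B) + N (cadjoint C)) / 2"])
  subgoal by simp
  subgoal using up_0 by blast
  subgoal by simp
  subgoal using up_0 by blast
  subgoal by simp
  subgoal for l \<theta> using F_bound[OF B C] by blast
  subgoal for l \<theta>
  proof -
    assume l: "l \<in> unit_pairs"
    obtain l1 l2 where l12: "l = (l1, l2)" by (cases l)
    let ?c = "((l1+l2) * sq2/2, (l1-l2) * sq2/2)"
    have c: "?c \<in> unit_pairs" using up_M1 l l12 by simp
    have "N (ReOp (op_scale (E \<theta>) (op_add (op_scale l1 B) (op_scale l2 C))))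
       = \<bar>1 / sqrt 2\<bar> * N (ReOp (op_scale (E \<theta>) (op_add (op_scale ((l1+l2) * sq2/2) (op_add B C)) (op_scale ((l1-l2) * sq2/2) (op_diff B C)))))"
      using B C by (intro F_rel X_a1) simp_all
    then show ?thesis using c l12 by (intro bexI[OF _ c] bexI[of _ \<theta>]) auto
  qed
  subgoal for l \<theta>
  proof -
    assume l: "l \<in> unit_pairs"
    obtain l1 l2 where l12: "l = (l1, l2)" by (cases l)
    let ?a = "((l1+l2)/sq2, (l1-l2)/sq2)"
    have a: "?a \<in> unit_pairs" using up_M2 l l12 by simp
    have "N (ReOp (op_scale (E \<theta>) (op_add (op_scale l1 (op_add B C)) (op_scale l2 (op_diff B C)))))
       = \<bar>sqrt 2\<bar> * N (ReOp (op_scale (E \<theta>) (op_add (op_scale ((l1+l2)/sq2) B) (op_scale ((l1-l2)/sq2) C))))"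
      using B C by (intro F_rel X_a2) simp_all
    then show ?thesis using a l12 by (intro bexI[OF _ a] bexI[of _ \<theta>]) auto
  qed
  done

lemma part_b1:
  assumes B: "bounded_op B"
  shows "wNe N (ReOp B) (ImOp B) = 1 / sqrt 2 * wNe N B (cadjoint B)"
  unfolding wNe_def
  apply (rule sup2_eq_scale[where M="(N (ReOp B) + N (ImOp B) + N (cadjoint (ReOp B)) + N (cadjoint (ImOp B))) / 2"])
  subgoal by simp
  subgoal using up_0 by blast
  subgoal by simp
  subgoal using up_0 by blast
  subgoal by simp
  subgoal for l \<theta> using F_bound[OF bounded_ReOp[OF B] bounded_ImOp[OF B]] by blast
  subgoal for l \<theta>
  proof -
    assume l: "l \<in> unit_pairs"
    obtain l1 l2 where l12: "l = (l1, l2)" by (cases l)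
    let ?c = "((l1 - \<i>*l2) * sq2/2, (l1 + \<i>*l2) * sq2/2)"
    have c: "?c \<in> unit_pairs" using up_M1' l l12 by simp
    have "N (ReOp (op_scale (E \<theta>) (op_add (op_scale l1 (ReOp B)) (op_scale l2 (ImOp B)))))
       = \<bar>1 / sqrt 2\<bar> * N (ReOp (op_scale (E \<theta>) (op_add (op_scale ((l1 - \<i>*l2) * sq2/2) B) (op_scale ((l1 + \<i>*l2) * sq2/2) (cadjoint B)))))"
      using B by (intro F_rel X_b1) simp_all
    then show ?thesis using c l12 by (intro bexI[OF _ c] bexI[of _ \<theta>]) auto
  qed
  subgoal for l \<theta>
  proof -
    assume l: "l \<in> unit_pairs"
    obtain l1 l2 where l12: "l = (l1, l2)" by (cases l)
    let ?a = "((l1+l2)/sq2, \<i>*(l1-l2)/sq2)"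
    have a: "?a \<in> unit_pairs" using up_M2' l l12 by simp
    have "N (ReOp (op_scale (E \<theta>) (op_add (op_scale l1 B) (op_scale l2 (cadjoint B)))))
       = \<bar>sqrt 2\<bar> * N (ReOp (op_scale (E \<theta>) (op_add (op_scale ((l1+l2)/sq2) (ReOp B)) (op_scale (\<i>*(l1-l2)/sq2) (ImOp B)))))"
      using B by (intro F_rel X_b2) simp_all
    then show ?thesis using a l12 by (intro bexI[OF _ a] bexI[of _ \<theta>]) auto
  qed
  done

lemma h1_helper:
  assumes B: "bounded_op B" and mu: "cmod \<mu> \<le> sqrt 2"
  shows "N (ReOp (op_scale \<mu> B)) \<le> sqrt 2 * N (ReOp (op_scale (E (Arg \<mu>)) B))"
proof -
  have "0 \<le> N (ReOp (op_scale (E (Arg \<mu>)) B))" using B by (intro N_nonneg) simp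
  then have "cmod \<mu> * N (ReOp (op_scale (E (Arg \<mu>)) B)) \<le> sqrt 2 * N (ReOp (op_scale (E (Arg \<mu>)) B))"
    using mu by (intro mult_right_mono) auto
  then show ?thesis using polar[OF B, of \<mu>] by simp
qed

lemma wN_nested: "wN N B = (SUP u\<in>{()}. SUP \<theta>\<in>(UNIV::real set). N (ReOp (op_scale (E \<theta>) B)))"
  by (simp add: wN_def)

lemma part_BBs:
  assumes B: "bounded_op B"
  shows "wNe N B (cadjoint B) = sqrt 2 * wN N B"
  unfolding wNe_def wN_nested
  apply (rule sup2_eq_scale[where M="(N B + N (cadjoint B) + N (cadjoint B) + N (cadjoint (cadjoint B))) / 2"])
  subgoal by simp
  subgoal using up_0 by blast
  subgoal by simp
  subgoal by simp
  subgoal by simp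
  subgoal for l \<theta> using F_bound[OF B bounded_cadjoint[OF B]] by blast
  subgoal for l \<theta>
  proof -
    assume l: "l \<in> unit_pairs"
    obtain l1 l2 where l12: "l = (l1, l2)" by (cases l)
    define \<mu> where "\<mu> = E \<theta> * l1 + cnj (E \<theta> * l2)"
    have "cmod \<mu> \<le> cmod l1 + cmod l2" unfolding \<mu>_def
      using norm_triangle_ineq[of "E \<theta> * l1" "cnj (E \<theta> * l2)"] by (simp add: norm_mult)
    also have "\<dots> \<le> sqrt 2" using up_sum l l12 by simp
    finally have mu: "cmod \<mu> \<le> sqrt 2" .
    have "N (ReOp (op_scale (E \<theta>) (op_add (op_scale l1 B) (op_scale l2 (cadjoint B)))))
        = N (ReOp (op_scale \<mu> B))" unfolding \<mu>_def using B by (simp add: Re_eq_mu)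
    also have "\<dots> \<le> sqrt 2 * N (ReOp (op_scale (E (Arg \<mu>)) B))" by (rule h1_helper[OF B mu])
    finally show ?thesis using l12 by (intro bexI[of _ "()"] bexI[of _ "Arg \<mu>"]) auto
  qed
  subgoal for u \<phi>
  proof -
    let ?a = "(E \<phi> / sq2, cnj (E \<phi>) / sq2)"
    have a: "?a \<in> unit_pairs" by (simp add: up_iff norm_divide power_divide)
    have mu: "E 0 * (E \<phi> / sq2) + cnj (E 0 * (cnj (E \<phi>) / sq2)) = complex_of_real (sqrt 2) * E \<phi>"
    proof -
      have "E \<phi> / sq2 + E \<phi> / sq2 = (2 / sq2) * E \<phi>" by (simp add: field_simps)
      also have "2 / sq2 = sq2" using s2_sq by (simp add: field_simps)
      finally show ?thesis by simp
    qed
    have "N (ReOp (op_scale (E 0) (op_add (op_scale (E \<phi> / sq2) B) (op_scale (cnj (E \<phi>) / sq2) (cadjoint B)))))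
        = N (ReOp (op_scale (complex_of_real (sqrt 2) * E \<phi>) B))"
      using B by (simp only: Re_eq_mu mu)
    also have "\<dots> = sqrt 2 * N (ReOp (op_scale (E \<phi>) B))" using N_ReOp_scale_mult[OF B] by simp
    finally show ?thesis by (intro bexI[OF _ a] bexI[of _ 0]) auto
  qed
  done

lemma part_BB:
  assumes B: "bounded_op B"
  shows "wNe N B B = sqrt 2 * wN N B"
  unfolding wNe_def wN_nested
  apply (rule sup2_eq_scale[where M="(N B + N B + N (cadjoint B) + N (cadjoint B)) / 2"])
  subgoal by simp
  subgoal using up_0 by blast
  subgoal by simp
  subgoal by simp
  subgoal by simp
  subgoal for l \<theta> using F_bound[OF B B] by blast
  subgoal for l \<theta>
  proof -
    assume l: "l \<in> unit_pairs"
    obtain l1 l2 where l12: "l = (l1, l2)" by (cases l)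
    define \<mu> where "\<mu> = E \<theta> * (l1 + l2)"
    have "cmod \<mu> \<le> cmod l1 + cmod l2" unfolding \<mu>_def
      using norm_triangle_ineq[of l1 l2] by (simp add: norm_mult)
    also have "\<dots> \<le> sqrt 2" using up_sum l l12 by simp
    finally have mu: "cmod \<mu> \<le> sqrt 2" .
    have "N (ReOp (op_scale (E \<theta>) (op_add (op_scale l1 B) (op_scale l2 B))))
        = N (ReOp (op_scale \<mu> B))" unfolding \<mu>_def by (simp add: Re_eq_BB)
    also have "\<dots> \<le> sqrt 2 * N (ReOp (op_scale (E (Arg \<mu>)) B))" by (rule h1_helper[OF B mu])
    finally show ?thesis using l12 by (intro bexI[of _ "()"] bexI[of _ "Arg \<mu>"]) auto
  qed
  subgoal for u \<phi>
  proof -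
    let ?a = "(1 / sq2, 1 / sq2)"
    have a: "?a \<in> unit_pairs" by (simp add: up_iff norm_divide power_divide)
    have mu: "E \<phi> * (1 / sq2 + 1 / sq2) = complex_of_real (sqrt 2) * E \<phi>"
    proof -
      have "1/sq2 + 1/sq2 = sq2" using s2_sq by (simp add: field_simps)
      then show ?thesis by simp
    qed
    have "N (ReOp (op_scale (E \<phi>) (op_add (op_scale (1 / sq2) B) (op_scale (1 / sq2) B))))
        = N (ReOp (op_scale (complex_of_real (sqrt 2) * E \<phi>) B))"
      by (simp only: Re_eq_BB mu)
    also have "\<dots> = sqrt 2 * N (ReOp (op_scale (E \<phi>) B))" using N_ReOp_scale_mult[OF B] by simp
    finally show ?thesis by (intro bexI[OF _ a] bexI[of _ \<phi>]) auto
  qed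
  done

lemma part_d:
  assumes B: "bounded_op B" and C: "bounded_op C"
  shows "wNe N (cadjoint B) (cadjoint C) = wNe N B C"
proof -
  have "wNe N (cadjoint B) (cadjoint C) = 1 * wNe N B C"
  unfolding wNe_def
  apply (rule sup2_eq_scale[where M="(N (cadjoint B) + N (cadjoint C) + N (cadjoint (cadjoint B)) + N (cadjoint (cadjoint C))) / 2"])
  subgoal by simp
  subgoal using up_0 by blast
  subgoal by simp
  subgoal using up_0 by blast
  subgoal by simp
  subgoal for l \<theta> using F_bound[OF bounded_cadjoint[OF B] bounded_cadjoint[OF C]] by blast
  subgoal for l \<theta>
  proof -
    assume l: "l \<in> unit_pairs"
    obtain l1 l2 where l12: "l = (l1, l2)" by (cases l)
    have c: "(cnj l1, cnj l2) \<in> unit_pairs" using up_cnj l l12 by simp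
    show ?thesis using Re_adj[OF B C, of \<theta> l1 l2] l12 by (intro bexI[OF _ c] bexI[of _ "-\<theta>"]) auto
  qed
  subgoal for l \<theta>
  proof -
    assume l: "l \<in> unit_pairs"
    obtain l1 l2 where l12: "l = (l1, l2)" by (cases l)
    have c: "(cnj l1, cnj l2) \<in> unit_pairs" using up_cnj l l12 by simp
    show ?thesis using Re_adj[OF B C, of "-\<theta>" "cnj l1" "cnj l2"] l12 by (intro bexI[OF _ c] bexI[of _ "-\<theta>"]) auto
  qed
  done
  then show ?thesis by simp
qed

lemma part_e:
  assumes B: "bounded_op B" and C: "bounded_op C" and W: "weakly_unitarily_invariant N"
    and U: "unitary_op U"
  shows "wNe N (cadjoint U \<circ> B \<circ> U) (cadjoint U \<circ> C \<circ> U) = wNe N B C"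
proof -
  have Ub: "bounded_op U" using U unfolding unitary_op_def by blast
  have "N (ReOp (op_scale (E \<theta>) (op_add (op_scale (fst l) (cadjoint U \<circ> B \<circ> U)) (op_scale (snd l) (cadjoint U \<circ> C \<circ> U)))))
      = N (ReOp (op_scale (E \<theta>) (op_add (op_scale (fst l) B) (op_scale (snd l) C))))" for l \<theta>
    unfolding Re_unit[OF B C Ub]
    using W U B C unfolding weakly_unitarily_invariant_def by simp
  then show ?thesis unfolding wNe_def by simp
qed

lemma part_f_inner:
  assumes X: "bounded_op X"
  shows "(SUP \<theta>\<in>(UNIV::real set). N (ReOp (op_scale (E \<theta>) X)))
       = (SUP ab\<in>{(a, b). (a::real)\<^sup>2 + b\<^sup>2 = 1}.
              N (op_add (op_scale (complex_of_real (fst ab)) (ReOp X)) (op_scale (complex_of_real (snd ab)) (ImOp X))))"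
proof -
  have "(\<lambda>\<theta>. N (ReOp (op_scale (E \<theta>) X))) ` UNIV =
        (\<lambda>ab. N (op_add (op_scale (complex_of_real (fst ab)) (ReOp X)) (op_scale (complex_of_real (snd ab)) (ImOp X)))) ` {(a, b). (a::real)\<^sup>2 + b\<^sup>2 = 1}"
  proof (intro equalityI subsetI)
    fix y assume "y \<in> (\<lambda>\<theta>. N (ReOp (op_scale (E \<theta>) X))) ` UNIV"
    then obtain \<theta> where y: "y = N (ReOp (op_scale (E \<theta>) X))" by blast
    have m: "(cos \<theta>, - sin \<theta>) \<in> {(a, b). (a::real)\<^sup>2 + b\<^sup>2 = 1}" by simp
    show "y \<in> (\<lambda>ab. N (op_add (op_scale (complex_of_real (fst ab)) (ReOp X)) (op_scale (complex_of_real (snd ab)) (ImOp X)))) ` {(a, b). (a::real)\<^sup>2 + b\<^sup>2 = 1}"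
      unfolding y Re_rot[OF X] by (rule image_eqI[OF _ m]) simp
  next
    fix y assume "y \<in> (\<lambda>ab. N (op_add (op_scale (complex_of_real (fst ab)) (ReOp X)) (op_scale (complex_of_real (snd ab)) (ImOp X)))) ` {(a, b). (a::real)\<^sup>2 + b\<^sup>2 = 1}"
    then obtain a b where ab: "a\<^sup>2 + b\<^sup>2 = 1" and y: "y = N (op_add (op_scale (complex_of_real a) (ReOp X)) (op_scale (complex_of_real b) (ImOp X)))"
      by auto
    have "a\<^sup>2 + (- b)\<^sup>2 = 1" using ab by simp
    then obtain t where t: "a = cos t" "b = - sin t" by (rule sincos_total_2pi) auto
    have "y = N (ReOp (op_scale (E t) X))" unfolding y Re_rot[OF X] using t by simp
    then show "y \<in> (\<lambda>\<theta>. N (ReOp (op_scale (E \<theta>) X))) ` UNIV" by blast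
  qed
  then show ?thesis by simp
qed

lemma part_f:
  assumes B: "bounded_op B" and C: "bounded_op C"
  shows "wNe N B C =
           (SUP l\<in>unit_pairs. SUP ab\<in>{(a, b). (a::real)\<^sup>2 + b\<^sup>2 = 1}.
              N (op_add (op_scale (complex_of_real (fst ab))
                           (ReOp (op_add (op_scale (fst l) B) (op_scale (snd l) C))))
                        (op_scale (complex_of_real (snd ab))
                           (ImOp (op_add (op_scale (fst l) B) (op_scale (snd l) C))))))"
  unfolding wNe_def using B C by (intro SUP_cong refl part_f_inner) simp

end


theorem proposition2p3:
  fixes B C :: "'h::{complex_inner, complete_space} \<Rightarrow> 'h"
    and N :: "('h \<Rightarrow> 'h) \<Rightarrow> real"
  assumes N: "is_op_norm N"
    and B: "bounded_op B" and C: "bounded_op C"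
  shows "wNe N B C = 1 / sqrt 2 * wNe N (op_add B C) (op_diff B C)
    \<and> wNe N (ReOp B) (ImOp B) = 1 / sqrt 2 * wNe N B (cadjoint B)
    \<and> 1 / sqrt 2 * wNe N B (cadjoint B) = wN N B
    \<and> wNe N B B = sqrt 2 * wN N B
    \<and> wNe N (cadjoint B) (cadjoint C) = wNe N B C
    \<and> (weakly_unitarily_invariant N \<longrightarrow>
           (\<forall>U. unitary_op U \<longrightarrow>
              wNe N (cadjoint U \<circ> B \<circ> U) (cadjoint U \<circ> C \<circ> U) = wNe N B C))
    \<and> wNe N B C =
           (SUP l\<in>unit_pairs. SUP ab\<in>{(a, b). (a::real)\<^sup>2 + b\<^sup>2 = 1}.
              N (op_add (op_scale (complex_of_real (fst ab))
                           (ReOp (op_add (op_scale (fst l) B) (op_scale (snd l) C))))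
                        (op_scale (complex_of_real (snd ab))
                           (ImOp (op_add (op_scale (fst l) B) (op_scale (snd l) C))))))"
proof -
  interpret opnorm N by (rule opnorm.intro[OF N])
  have bs: "1 / sqrt 2 * wNe N B (cadjoint B) = wN N B"
    using part_BBs[OF B] by simp
  show ?thesis
    using part_a[OF B C] part_b1[OF B] bs part_BB[OF B] part_d[OF B C] part_e[OF B C] part_f[OF B C]
    by blast
qed

end
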